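(* Let $\rho$ be a representation of $32_{65}$ over a set $U$. Then the graph on $U$ whose edges are the pairs $\{x,y\}$ with $(x,y)\in\rho(a)$ contains a clique of size $6$.
   Context: $32_{65}$ is the finite integral symmetric relation algebra with atoms $1'$, $a$, $b$, $c$, all symmetric, in which a diversity cycle $xyz$ (with $x,y,z\in\{a,b,c\}$) is mandatory (i.e. $x;y\ge z$) if it involves $a$ and forbidden (i.e. $x;y\cdot z=0$) otherwise. A representation over a set $U$ is an embedding $\rho$ into the full relation algebra $\langle\mathcal P(U\times U),\cup,{}^c,\circ,{}^{-1},\mathrm{Id}_U\rangle$. *)

theory Defs
  imports Main
begin

text \<open>The finite integral symmetric relation algebra 32_65.  It is atomic with
atoms Id', a, b, c; its elements are the sets of atoms (joins of atoms).\<close>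

datatype atom = Ident | Aa | Ba | Ca

type_synonym ra32_65 = "atom set"

text \<open>For diversity atoms x, y:
x;y contains Ident iff x = y (all atoms are symmetric), and contains the
diversity atom z iff the cycle xyz is mandatory, i.e. iff it involves a;
cycles not involving a are forbidden.\<close>

fun is_div :: "atom \<Rightarrow> bool" where
  "is_div Ident = False"
| "is_div _ = True"

definition atom_comp :: "atom \<Rightarrow> atom \<Rightarrow> atom set" where
  "atom_comp x y =
     (if x = Ident then {y}
      else if y = Ident then {x}
      else {z. (z = Ident \<and> x = y) \<or> (is_div z \<and> Aa \<in> {x, y, z})})"

definition ra_comp :: "ra32_65 \<Rightarrow> ra32_65 \<Rightarrow> ra32_65" where
  "ra_comp X Y = (\<Union>x\<in>X. \<Union>y\<in>Y. atom_comp x y)"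

text \<open>Converse: every atom is symmetric, so converse is the identity map.\<close>
definition ra_conv :: "ra32_65 \<Rightarrow> ra32_65" where
  "ra_conv X = X"

definition ra_one :: ra32_65 where
  "ra_one = {Ident}"

definition representation :: "'u set \<Rightarrow> (ra32_65 \<Rightarrow> ('u \<times> 'u) set) \<Rightarrow> bool" where
  "representation U \<rho> \<longleftrightarrow>
     inj \<rho>
   \<and> (\<forall>X. \<rho> X \<subseteq> U \<times> U)
   \<and> (\<forall>X Y. \<rho> (X \<union> Y) = \<rho> X \<union> \<rho> Y)
   \<and> (\<forall>X. \<rho> (- X) = (U \<times> U) - \<rho> X)
   \<and> (\<forall>X Y. \<rho> (ra_comp X Y) = \<rho> X O \<rho> Y)
   \<and> (\<forall>X. \<rho> (ra_conv X) = (\<rho> X)\<inverse>)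
   \<and> \<rho> ra_one = Id_on U"

end

theory Submission
  imports Defs
begin

lemma comp_BB: "ra_comp {Ba} {Ba} = {Ident, Aa}"
  unfolding ra_comp_def atom_comp_def by (auto elim: is_div.elims)
lemma comp_CC: "ra_comp {Ca} {Ca} = {Ident, Aa}"
  unfolding ra_comp_def atom_comp_def by (auto elim: is_div.elims)
lemma comp_BC: "ra_comp {Ba} {Ca} = {Aa}"
  unfolding ra_comp_def atom_comp_def by (auto elim: is_div.elims)
lemma comp_CB: "ra_comp {Ca} {Ba} = {Aa}"
  unfolding ra_comp_def atom_comp_def by (auto elim: is_div.elims)
lemma comp_AB: "ra_comp {Aa} {Ba} = {Aa, Ba, Ca}"
  unfolding ra_comp_def atom_comp_def by (auto elim: is_div.elims)

lemma rep_un: "representation U \<rho> \<Longrightarrow> \<rho> (X \<union> Y) = \<rho> X \<union> \<rho> Y"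
  unfolding representation_def by (elim conjE) (erule allE)+
lemma rep_cp: "representation U \<rho> \<Longrightarrow> \<rho> (- X) = U \<times> U - \<rho> X"
  unfolding representation_def by (elim conjE) (erule allE)+
lemma rep_sb: "representation U \<rho> \<Longrightarrow> \<rho> X \<subseteq> U \<times> U"
  unfolding representation_def by (elim conjE) (erule allE)+
lemma rep_comp: "representation U \<rho> \<Longrightarrow> \<rho> (ra_comp X Y) = \<rho> X O \<rho> Y"
  unfolding representation_def by (elim conjE) (erule allE)+
lemma rep_cv: "representation U \<rho> \<Longrightarrow> \<rho> X = (\<rho> X)\<inverse>"
  unfolding representation_def ra_conv_def by (elim conjE) (erule allE)+
lemma rep_one: "representation U \<rho> \<Longrightarrow> \<rho> {Ident} = Id_on U"
  unfolding representation_def ra_one_def by (elim conjE)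
lemma rep_inj: "representation U \<rho> \<Longrightarrow> inj \<rho>"
  unfolding representation_def by (elim conjE)

lemma rep_mono:
  assumes "representation U \<rho>" "X \<subseteq> Y"
  shows "\<rho> X \<subseteq> \<rho> Y"
proof -
  have e: "X \<union> Y = Y" using assms(2) by blast
  have "\<rho> Y = \<rho> X \<union> \<rho> Y" using rep_un[OF assms(1), of X Y] unfolding e .
  thus ?thesis by blast
qed

lemma rep_disj:
  assumes "representation U \<rho>" "p \<noteq> q"
  shows "\<rho> {p} \<inter> \<rho> {q} = {}"
proof -
  have "{q} \<subseteq> - {p}" using assms(2) by blast
  hence "\<rho> {q} \<subseteq> \<rho> (- {p})" by (rule rep_mono[OF assms(1)])
  also have "\<dots> = U \<times> U - \<rho> {p}" by (rule rep_cp[OF assms(1)])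
  finally show ?thesis by blast
qed

lemma rep_empty:
  assumes "representation U \<rho>"
  shows "\<rho> {} = {}"
proof -
  have 1: "\<rho> (- UNIV) = U \<times> U - \<rho> UNIV" by (rule rep_cp[OF assms])
  have 2: "\<rho> ({} \<union> - {}) = \<rho> {} \<union> \<rho> (- {})" by (rule rep_un[OF assms])
  have 3: "\<rho> (- {}) = U \<times> U - \<rho> {}" by (rule rep_cp[OF assms])
  have 4: "\<rho> {} \<subseteq> U \<times> U" by (rule rep_sb[OF assms])
  have "\<rho> UNIV = U \<times> U" using 2 3 4 by auto
  with 1 show ?thesis by simp
qed

lemma rep_sym:
  assumes "representation U \<rho>" "(x, y) \<in> \<rho> X"
  shows "(y, x) \<in> \<rho> X"
  using rep_cv[OF assms(1), of X] assms(2) by blast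

lemma rep_two:
  assumes "representation U \<rho>"
  shows "\<rho> {Ident, Aa} = Id_on U \<union> \<rho> {Aa}"
proof -
  have "\<rho> ({Ident} \<union> {Aa}) = \<rho> {Ident} \<union> \<rho> {Aa}" by (rule rep_un[OF assms])
  thus ?thesis using rep_one[OF assms] by (simp add: insert_commute)
qed

theorem mainTheorem11:
  fixes U :: "'u set" and \<rho> :: "ra32_65 \<Rightarrow> ('u \<times> 'u) set"
  assumes "representation U \<rho>"
  shows "\<exists>S \<subseteq> U. card S = 6 \<and> (\<forall>x\<in>S. \<forall>y\<in>S. x \<noteq> y \<longrightarrow> (x, y) \<in> \<rho> {Aa})"
proof -
  note R = assms
  define A where "A = \<rho> {Aa}"
  define B where "B = \<rho> {Ba}"
  define C where "C = \<rho> {Ca}"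
  have sub: "\<And>X. \<rho> X \<subseteq> U \<times> U" using rep_sb[OF R] by blast
  have BB: "B O B = Id_on U \<union> A" unfolding B_def A_def
    using rep_comp[OF R, of "{Ba}" "{Ba}"] comp_BB rep_two[OF R] by simp
  have CC: "C O C = Id_on U \<union> A" unfolding C_def A_def
    using rep_comp[OF R, of "{Ca}" "{Ca}"] comp_CC rep_two[OF R] by simp
  have BC: "B O C = A" unfolding B_def A_def C_def
    using rep_comp[OF R, of "{Ba}" "{Ca}"] comp_BC by simp
  have CB: "C O B = A" unfolding B_def A_def C_def
    using rep_comp[OF R, of "{Ca}" "{Ba}"] comp_CB by simp
  have AB: "A \<subseteq> A O B" unfolding B_def A_def
    using rep_comp[OF R, of "{Aa}" "{Ba}"] comp_AB rep_mono[OF R, of "{Aa}" "{Aa, Ba, Ca}"] by auto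
  have dAB: "A \<inter> B = {}" unfolding A_def B_def using rep_disj[OF R] by simp
  have dBC: "B \<inter> C = {}" unfolding C_def B_def using rep_disj[OF R] by simp
  have dIB: "Id_on U \<inter> B = {}"
    using rep_disj[OF R, of Ident Ba] rep_one[OF R] unfolding B_def by simp
  have symB: "\<And>x y. (x,y) \<in> B \<Longrightarrow> (y,x) \<in> B" unfolding B_def using rep_sym[OF R] by blast
  have symC: "\<And>x y. (x,y) \<in> C \<Longrightarrow> (y,x) \<in> C" unfolding C_def using rep_sym[OF R] by blast
  have Ane: "A \<noteq> {}"
  proof
    assume "A = {}"
    hence "\<rho> {Aa} = \<rho> {}" unfolding A_def using rep_empty[OF R] by simp
    moreover have "inj \<rho>" using rep_inj[OF R] .
    ultimately show False by (metis empty_iff inj_eq insertI1)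
  qed
  have two: "(p,r) \<in> Id_on U \<union> A" if "(p,q) \<in> B \<union> C" "(q,r) \<in> B \<union> C" for p q r
  proof -
    have "(p,r) \<in> (B O B) \<union> (C O C) \<union> (B O C) \<union> (C O B)"
      using that by (auto intro: relcompI)
    thus ?thesis unfolding BB CC BC CB by blast
  qed
  have adj: "\<And>p q r. (p,q) \<in> B \<union> C \<Longrightarrow> (q,r) \<in> B \<union> C \<Longrightarrow> p \<noteq> r \<Longrightarrow> (p,r) \<in> A"
    using two by blast
  have common: "\<exists>z1 z2 z3. (x,z1) \<in> B \<and> (z1,w) \<in> B \<and> (x,z2) \<in> C \<and> (z2,w) \<in> C
      \<and> (x,z3) \<in> B \<and> (z3,w) \<in> C" if "(x,w) \<in> A" for x w
  proof -
    have "(x,w) \<in> B O B" "(x,w) \<in> C O C" "(x,w) \<in> B O C" using that BB CC BC by auto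
    then show ?thesis by (elim relcompE) blast
  qed
  obtain x v where xv: "(x,v) \<in> A" using Ane by auto
  then obtain w where xw: "(x,w) \<in> A" and wv: "(w,v) \<in> B" using AB by blast
  obtain z1 z2 z3 where z: "(x,z1) \<in> B" "(z1,w) \<in> B" "(x,z2) \<in> C" "(z2,w) \<in> C"
      "(x,z3) \<in> B" "(z3,w) \<in> C" using common[OF xw] by blast
  obtain z4 z5 z6 where z': "(x,z4) \<in> B" "(z4,v) \<in> B" "(x,z5) \<in> C" "(z5,v) \<in> C"
      "(x,z6) \<in> B" "(z6,v) \<in> C" using common[OF xv] by blast
  have cross: False if "(w,z) \<in> B \<union> C" "(z,v) \<in> B \<union> C" for z
  proof -
    have "(w,v) \<in> Id_on U \<union> A" using two[OF that] .
    thus False using wv dAB dIB by blast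
  qed
  have neq: "z1 \<noteq> z2" "z1 \<noteq> z3" "z2 \<noteq> z3" "z4 \<noteq> z5" "z4 \<noteq> z6" "z5 \<noteq> z6"
    using z z' dBC by blast+
  have neq2: "zi \<noteq> zj" if "zi \<in> {z1,z2,z3}" "zj \<in> {z4,z5,z6}" for zi zj
  proof
    assume "zi = zj"
    have "(w,zi) \<in> B \<union> C" using that(1) z symB symC by blast
    moreover have "(zj,v) \<in> B \<union> C" using that(2) z' by blast
    ultimately show False using cross \<open>zi = zj\<close> by blast
  qed
  define S where "S = {z1,z2,z3,z4,z5,z6}"
  have N: "\<And>z. z \<in> S \<Longrightarrow> (x,z) \<in> B \<union> C" unfolding S_def using z z' by blast
  have n2: "z1 \<noteq> z4" "z1 \<noteq> z5" "z1 \<noteq> z6" "z2 \<noteq> z4" "z2 \<noteq> z5" "z2 \<noteq> z6"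
     "z3 \<noteq> z4" "z3 \<noteq> z5" "z3 \<noteq> z6" by (rule neq2; simp)+
  have "card S = 6" unfolding S_def using neq n2 by simp
  moreover have "S \<subseteq> U" using N sub unfolding B_def C_def by blast
  moreover have "\<forall>p\<in>S. \<forall>q\<in>S. p \<noteq> q \<longrightarrow> (p, q) \<in> A"
  proof (intro ballI impI)
    fix p q assume "p \<in> S" "q \<in> S" "p \<noteq> q"
    then have "(p,x) \<in> B \<union> C" "(x,q) \<in> B \<union> C" using N symB symC by blast+
    thus "(p,q) \<in> A" using adj \<open>p \<noteq> q\<close> by blast
  qed
  ultimately have "S \<subseteq> U \<and> card S = 6 \<and> (\<forall>p\<in>S. \<forall>q\<in>S. p \<noteq> q \<longrightarrow> (p, q) \<in> \<rho> {Aa})"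
    unfolding A_def by blast
  thus ?thesis by blast
qed

end
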